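(* Let $G$ be a finitely generated group, $S$ a finite symmetric generating set, $\Gamma=\mathrm{Cay}(G,S)$, and $p\in(1,\infty)$. Let $f\in D^p(\Gamma)$. Suppose there exists a sequence $(\xi_n)$ of finitely supported functions $G\to\mathbb{K}$ such that: (1) $\sum_{\gamma\in G}\xi_n(\gamma)=1$ for all $n$; (2) for every $s\in S$, the functions $(\delta_s-\delta_e)*\xi_n*f$ converge point-wise to $0$ as $n\to\infty$; (3) there is $K>0$ such that for all $s\in S$ and all $n$, $\|(\delta_s-\delta_e)*\xi_n*f\|_{\ell^p(G)}<K$. Then the class $[f]$ of $f$ in $\overline{\ell^p H}^1(\Gamma)$ is $0$.
   Context: The Cayley graph $\Gamma=\mathrm{Cay}(G,S)$ has vertex set $G$ and edges $(\gamma,\gamma')$ with $s^{-1}\gamma=\gamma'$ for some $s\in S$. Functions take values in $\mathbb{K}=\mathbb{R}$ or $\mathbb{C}$. The gradient is $\nabla g(\gamma,\gamma')=g(\gamma')-g(\gamma)$; $D^p(\Gamma)=\{f:G\to\mathbb{K}:\nabla f\in\ell^p(E)\}$ with norm $\|f\|^p_{D^p}=\|\nabla f\|^p_{\ell^p(E)}+|f(e)|^p$, and $\overline{\ell^p H}^1(\Gamma)=D^p(\Gamma)/\overline{\ell^p(G)+\mathbb{K}}^{D^p}$ ($\mathbb{K}$ = constant functions). $\delta_\gamma$ is the Dirac mass at $\gamma$, and convolution is $(\xi*f)(\eta)=\sum_{\gamma\in G}\xi(\gamma)f(\gamma^{-1}\eta)$. *)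

theory Defs
  imports "HOL-Analysis.Analysis"
begin

text \<open>The group G is a type of class group_add (written additively, not necessarily
 commutative): identity 0, inverse uminus, product +. Scalars: a real normed field
 that is complete (this covers real and complex).\<close>

inductive_set generated_by :: "'g::group_add set \<Rightarrow> 'g set" for S where
  gen_zero: "0 \<in> generated_by S"
| gen_step: "s \<in> S \<Longrightarrow> x \<in> generated_by S \<Longrightarrow> s + x \<in> generated_by S"

definition finite_symmetric_generating :: "'g::group_add set \<Rightarrow> bool" where
  "finite_symmetric_generating S \<longleftrightarrow>
     finite S \<and> uminus ` S = S \<and> generated_by S = UNIV"

definition cayley_edges :: "'g::group_add set \<Rightarrow> ('g \<times> 'g) set" where
  "cayley_edges S = {(x, y). \<exists>s\<in>S. - s + x = y}"

definition grad :: "('g \<Rightarrow> 'k::ab_group_add) \<Rightarrow> 'g \<times> 'g \<Rightarrow> 'k" where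
  "grad g e = g (snd e) - g (fst e)"

definition in_lp :: "real \<Rightarrow> ('a \<Rightarrow> 'k::real_normed_vector) \<Rightarrow> 'a set \<Rightarrow> bool" where
  "in_lp p g A \<longleftrightarrow> (\<lambda>x. norm (g x) powr p) summable_on A"

definition lp_norm :: "real \<Rightarrow> ('a \<Rightarrow> 'k::real_normed_vector) \<Rightarrow> 'a set \<Rightarrow> real" where
  "lp_norm p g A = (\<Sum>\<^sub>\<infinity>x\<in>A. norm (g x) powr p) powr (1 / p)"

definition in_Dp :: "'g::group_add set \<Rightarrow> real \<Rightarrow> ('g \<Rightarrow> 'k::real_normed_vector) \<Rightarrow> bool" where
  "in_Dp S p f \<longleftrightarrow> in_lp p (grad f) (cayley_edges S)"

definition Dp_norm :: "'g::group_add set \<Rightarrow> real \<Rightarrow> ('g \<Rightarrow> 'k::real_normed_vector) \<Rightarrow> real" where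
  "Dp_norm S p f =
     ((\<Sum>\<^sub>\<infinity>e\<in>cayley_edges S. norm (grad f e) powr p) + norm (f 0) powr p) powr (1 / p)"

text \<open>The class of f in the reduced l^p cohomology is zero iff f lies in the D^p-closure
 of l^p(G) + constants.\<close>
definition reduced_lpH1_class_zero ::
  "'g::group_add set \<Rightarrow> real \<Rightarrow> ('g \<Rightarrow> 'k::real_normed_vector) \<Rightarrow> bool" where
  "reduced_lpH1_class_zero S p f \<longleftrightarrow>
     (\<forall>\<epsilon>>0. \<exists>g c. in_lp p g UNIV \<and> Dp_norm S p (\<lambda>x. f x - g x - c) < \<epsilon>)"

definition dirac :: "'g \<Rightarrow> 'g \<Rightarrow> 'k::zero_neq_one" where
  "dirac a = (\<lambda>x. if x = a then 1 else 0)"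

definition conv :: "('g::group_add \<Rightarrow> 'k::real_normed_field) \<Rightarrow> ('g \<Rightarrow> 'k) \<Rightarrow> 'g \<Rightarrow> 'k" where
  "conv \<xi> f \<eta> = (\<Sum>\<^sub>\<infinity>\<gamma>. \<xi> \<gamma> * f (- \<gamma> + \<eta>))"

end

theory Submission imports Defs begin

lemma powr_add_bound:
  fixes a b p :: real
  assumes "0 \<le> a" "0 \<le> b" "0 < p"
  shows "(a + b) powr p \<le> 2 powr p * (a powr p + b powr p)"
proof -
  have "(a + b) powr p \<le> (2 * max a b) powr p"
    by (rule powr_mono2) (use assms in auto)
  also have "\<dots> = 2 powr p * max a b powr p"
    using assms by (simp add: powr_mult)
  also have "max a b powr p \<le> a powr p + b powr p"
    by (auto simp: max_def)
  hence "2 powr p * max a b powr p \<le> 2 powr p * (a powr p + b powr p)"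
    by (intro mult_left_mono) auto
  finally show ?thesis .
qed

lemma norm_powr_add_bound:
  fixes x y :: "'k::real_normed_vector"
  assumes "0 < p"
  shows "norm (x + y) powr p \<le> 2 powr p * (norm x powr p + norm y powr p)"
proof -
  have "norm (x + y) powr p \<le> (norm x + norm y) powr p"
    by (rule powr_mono2) (use assms norm_triangle_ineq in auto)
  also have "\<dots> \<le> 2 powr p * (norm x powr p + norm y powr p)"
    by (rule powr_add_bound) (use assms in auto)
  finally show ?thesis .
qed

lemma in_lp_add:
  fixes a b :: "'a \<Rightarrow> 'k::real_normed_vector"
  assumes "0 < p" "in_lp p a A" "in_lp p b A"
  shows "in_lp p (\<lambda>x. a x + b x) A"
  unfolding in_lp_def
proof (rule summable_on_comparison_test)
  show "(\<lambda>x. 2 powr p * (norm (a x) powr p + norm (b x) powr p)) summable_on A"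
    using assms unfolding in_lp_def by (intro summable_on_cmult_right summable_on_add)
qed (use norm_powr_add_bound[OF assms(1)] in auto)

lemma in_lp_scale:
  fixes a :: "'a \<Rightarrow> 'k::real_normed_field"
  assumes "in_lp p a A"
  shows "in_lp p (\<lambda>x. c * a x) A"
  using summable_on_cmult_right[OF assms[unfolded in_lp_def], of "norm c powr p"]
  unfolding in_lp_def by (simp add: norm_mult powr_mult)

lemma in_lp_scaleR:
  fixes a :: "'a \<Rightarrow> 'k::real_normed_vector"
  assumes "in_lp p a A"
  shows "in_lp p (\<lambda>x. c *\<^sub>R a x) A"
  using summable_on_cmult_right[OF assms[unfolded in_lp_def], of "\<bar>c\<bar> powr p"]
  unfolding in_lp_def by (simp add: powr_mult)

lemma in_lp_zero: "in_lp p (\<lambda>x. 0::'k::real_normed_vector) A"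
  unfolding in_lp_def by simp

lemma in_lp_sum:
  fixes a :: "'i \<Rightarrow> 'a \<Rightarrow> 'k::real_normed_vector"
  assumes "0 < p" "finite I" "\<And>i. i \<in> I \<Longrightarrow> in_lp p (a i) A"
  shows "in_lp p (\<lambda>x. \<Sum>i\<in>I. a i x) A"
  using assms(2,3)
proof (induction I rule: finite_induct)
  case empty then show ?case by (simp add: in_lp_zero)
next
  case (insert i I)
  then show ?case by (simp add: in_lp_add[OF assms(1)])
qed

lemma in_lp_neg:
  fixes a :: "'a \<Rightarrow> 'k::real_normed_vector"
  shows "in_lp p a A \<Longrightarrow> in_lp p (\<lambda>x. - a x) A"
  unfolding in_lp_def by simp


lemma core_step:
  fixes w :: "nat \<Rightarrow> 'a \<Rightarrow> 'k::real_normed_vector" and T :: "'a \<Rightarrow> 'k"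
  assumes p: "0 < p"
    and summ: "\<And>n. (\<lambda>x. norm (w n x) powr p) summable_on A"
    and bound: "\<And>n. (\<Sum>\<^sub>\<infinity>x\<in>A. norm (w n x) powr p) \<le> C"
    and cv: "\<And>x. x \<in> A \<Longrightarrow> (\<lambda>n. w n x) \<longlonglongrightarrow> 0"
    and sT: "(\<lambda>x. norm (T x) powr p) summable_on A"
  shows "\<exists>n. (\<lambda>x. norm (T x + w n x) powr p) summable_on A \<and>
     (\<Sum>\<^sub>\<infinity>x\<in>A. norm (T x + w n x) powr p) \<le>
       (\<Sum>\<^sub>\<infinity>x\<in>A. norm (T x) powr p) + (1 + 2 powr p * (1 + C))"
proof -
  define \<phi> where "\<phi> x = norm (T x) powr p" for x
  obtain F where F: "finite F" "F \<subseteq> A" "dist (sum \<phi> F) (infsum \<phi> A) \<le> 1"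
    using infsum_finite_approximation[of \<phi> A 1] sT unfolding \<phi>_def by auto
  have sTF: "\<phi> summable_on (A - F)" using sT summable_on_subset[of \<phi> A "A - F"] unfolding \<phi>_def by auto
  have AU: "A = F \<union> (A - F)" using F by auto
  have split\<phi>: "infsum \<phi> A = sum \<phi> F + infsum \<phi> (A - F)"
    using infsum_Un_disjoint[of \<phi> F "A - F"] sTF F AU by simp
  have tail: "infsum \<phi> (A - F) \<le> 1" using F(3) split\<phi> by (simp add: dist_real_def)
  have tailnn: "0 \<le> infsum \<phi> (A - F)" by (rule infsum_nonneg) (simp add: \<phi>_def)
  have "((\<lambda>n. \<Sum>x\<in>F. norm (T x + w n x) powr p) \<longlongrightarrow> (\<Sum>x\<in>F. norm (T x + 0) powr p)) sequentially"
  proof (rule tendsto_sum)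
    fix x assume "x \<in> F"
    hence "(\<lambda>n. w n x) \<longlonglongrightarrow> 0" using cv F by auto
    thus "((\<lambda>n. norm (T x + w n x) powr p) \<longlongrightarrow> norm (T x + 0) powr p) sequentially"
      using p by (intro tendsto_intros) auto
  qed
  hence "\<forall>\<^sub>F n in sequentially. (\<Sum>x\<in>F. norm (T x + w n x) powr p) < sum \<phi> F + 1"
    by (intro order_tendstoD) (auto simp: \<phi>_def)
  then obtain n where n: "(\<Sum>x\<in>F. norm (T x + w n x) powr p) < sum \<phi> F + 1"
    by (meson eventually_sequentially order.refl)
  define \<psi> where "\<psi> x = norm (T x + w n x) powr p" for x
  have s\<psi>: "\<psi> summable_on A"
    unfolding \<psi>_def
  proof (rule summable_on_comparison_test)
    show "(\<lambda>x. 2 powr p * (norm (T x) powr p + norm (w n x) powr p)) summable_on A"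
      using sT summ by (intro summable_on_cmult_right summable_on_add)
  qed (use norm_powr_add_bound[OF p] in auto)
  have s\<psi>F: "\<psi> summable_on (A - F)" using s\<psi> summable_on_subset by blast
  have sw: "(\<lambda>x. norm (w n x) powr p) summable_on (A - F)" using summ summable_on_subset by blast
  have "infsum \<psi> A = sum \<psi> F + infsum \<psi> (A - F)"
    using infsum_Un_disjoint[of \<psi> F "A - F"] s\<psi>F F AU by simp
  also have "infsum \<psi> (A - F) \<le> (\<Sum>\<^sub>\<infinity>x\<in>A - F. 2 powr p * (\<phi> x + norm (w n x) powr p))"
    proof (rule infsum_mono[OF s\<psi>F])
    show "(\<lambda>x. 2 powr p * (\<phi> x + norm (w n x) powr p)) summable_on A - F"
      using sTF sw by (intro summable_on_cmult_right summable_on_add)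
  qed (use norm_powr_add_bound[OF p] in \<open>auto simp: \<psi>_def \<phi>_def\<close>)
  also have "\<dots> = 2 powr p * (infsum \<phi> (A - F) + (\<Sum>\<^sub>\<infinity>x\<in>A - F. norm (w n x) powr p))"
    using sTF sw by (simp add: infsum_cmult_right infsum_add summable_on_add)
  also have "(\<Sum>\<^sub>\<infinity>x\<in>A - F. norm (w n x) powr p) \<le> (\<Sum>\<^sub>\<infinity>x\<in>A. norm (w n x) powr p)"
    by (rule infsum_mono_neutral[OF sw summ]) auto
  also have "\<dots> \<le> C" by (rule bound)
  finally have "infsum \<psi> A \<le> sum \<psi> F + 2 powr p * (infsum \<phi> (A - F) + C)"
    by simp
  also have "\<dots> \<le> sum \<phi> F + 1 + 2 powr p * (1 + C)"
    using n tail unfolding \<psi>_def by (intro add_mono mult_left_mono) auto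
  also have "\<dots> \<le> infsum \<phi> A + (1 + 2 powr p * (1 + C))"
    using split\<phi> tailnn by simp
  finally show ?thesis using s\<psi> unfolding \<psi>_def \<phi>_def by blast
qed


lemma core_induct:
  fixes w :: "nat \<Rightarrow> 'a \<Rightarrow> 'k::real_normed_vector"
  assumes p: "0 < p"
    and summ: "\<And>n. (\<lambda>x. norm (w n x) powr p) summable_on A"
    and bound: "\<And>n. (\<Sum>\<^sub>\<infinity>x\<in>A. norm (w n x) powr p) \<le> C"
    and cv: "\<And>x. x \<in> A \<Longrightarrow> (\<lambda>n. w n x) \<longlonglongrightarrow> 0"
  shows "\<exists>m. (\<lambda>x. norm (\<Sum>k<N. w (m k) x) powr p) summable_on A \<and>
     (\<Sum>\<^sub>\<infinity>x\<in>A. norm (\<Sum>k<N. w (m k) x) powr p) \<le> real N * (1 + 2 powr p * (1 + C))"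
proof (induction N)
  case 0
  then show ?case by simp
next
  case (Suc N)
  then obtain m where m: "(\<lambda>x. norm (\<Sum>k<N. w (m k) x) powr p) summable_on A"
     "(\<Sum>\<^sub>\<infinity>x\<in>A. norm (\<Sum>k<N. w (m k) x) powr p) \<le> real N * (1 + 2 powr p * (1 + C))"
    by blast
  obtain n where n: "(\<lambda>x. norm ((\<Sum>k<N. w (m k) x) + w n x) powr p) summable_on A"
     "(\<Sum>\<^sub>\<infinity>x\<in>A. norm ((\<Sum>k<N. w (m k) x) + w n x) powr p) \<le>
       (\<Sum>\<^sub>\<infinity>x\<in>A. norm (\<Sum>k<N. w (m k) x) powr p) + (1 + 2 powr p * (1 + C))"
    using core_step[OF p summ bound cv m(1)] by blast
  define m' where "m' = m(N := n)"
  have eq: "(\<Sum>k<Suc N. w (m' k) x) = (\<Sum>k<N. w (m k) x) + w n x" for x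
    unfolding m'_def by (simp add: sum.lessThan_Suc)
  have "(\<lambda>x. norm (\<Sum>k<Suc N. w (m' k) x) powr p) summable_on A"
    unfolding eq by (rule n(1))
  moreover have "(\<Sum>\<^sub>\<infinity>x\<in>A. norm (\<Sum>k<Suc N. w (m' k) x) powr p) \<le> real (Suc N) * (1 + 2 powr p * (1 + C))"
    unfolding eq using n(2) m(2) by (simp add: algebra_simps)
  ultimately show ?case by blast
qed

lemma core:
  fixes w :: "nat \<Rightarrow> 'a \<Rightarrow> 'k::real_normed_vector"
  assumes p: "1 < p"
    and summ: "\<And>n. (\<lambda>x. norm (w n x) powr p) summable_on A"
    and bound: "\<And>n. (\<Sum>\<^sub>\<infinity>x\<in>A. norm (w n x) powr p) \<le> C"
    and cv: "\<And>x. x \<in> A \<Longrightarrow> (\<lambda>n. w n x) \<longlonglongrightarrow> 0"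
    and d: "0 < \<delta>"
  shows "\<exists>N m. 0 < N \<and> (\<lambda>x. norm ((1 / real N) *\<^sub>R (\<Sum>k<N. w (m k) x)) powr p) summable_on A \<and>
     (\<Sum>\<^sub>\<infinity>x\<in>A. norm ((1 / real N) *\<^sub>R (\<Sum>k<N. w (m k) x)) powr p) < \<delta>"
proof -
  define D where "D = 1 + 2 powr p * (1 + C)"
  have "((\<lambda>N. real N powr (1 - p)) \<longlongrightarrow> 0) sequentially"
    using p by (intro tendsto_neg_powr filterlim_real_sequentially) auto
  hence "((\<lambda>N. D * real N powr (1 - p)) \<longlongrightarrow> D * 0) sequentially"
    by (intro tendsto_mult) auto
  hence "\<forall>\<^sub>F N in sequentially. D * real N powr (1 - p) < \<delta>"
    using d by (intro order_tendstoD) auto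
  moreover have "\<forall>\<^sub>F N in sequentially. (0::nat) < N"
    by (simp add: eventually_gt_at_top)
  ultimately obtain N where N: "D * real N powr (1 - p) < \<delta>" "0 < N"
    by (metis (mono_tags, lifting) eventually_conj eventually_sequentially order.refl)
  obtain m where m: "(\<lambda>x. norm (\<Sum>k<N. w (m k) x) powr p) summable_on A"
     "(\<Sum>\<^sub>\<infinity>x\<in>A. norm (\<Sum>k<N. w (m k) x) powr p) \<le> real N * D"
    using core_induct[OF _ summ bound cv, of N] p unfolding D_def by auto
  have eq: "norm ((1 / real N) *\<^sub>R (\<Sum>k<N. w (m k) x)) powr p =
     (1 / real N) powr p * norm (\<Sum>k<N. w (m k) x) powr p" for x
    using N by (simp add: powr_mult powr_divide)
  have "(\<Sum>\<^sub>\<infinity>x\<in>A. norm ((1 / real N) *\<^sub>R (\<Sum>k<N. w (m k) x)) powr p)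
      = (1 / real N) powr p * (\<Sum>\<^sub>\<infinity>x\<in>A. norm (\<Sum>k<N. w (m k) x) powr p)"
    unfolding eq by (rule infsum_cmult_right) (use m in auto)
  also have "\<dots> \<le> (1 / real N) powr p * (real N * D)"
    using m(2) by (intro mult_left_mono) auto
  also have "\<dots> = D * real N powr (1 - p)"
    using N by (simp add: powr_diff powr_divide)
  finally have "(\<Sum>\<^sub>\<infinity>x\<in>A. norm ((1 / real N) *\<^sub>R (\<Sum>k<N. w (m k) x)) powr p) < \<delta>"
    using N by linarith
  moreover have "(\<lambda>x. norm ((1 / real N) *\<^sub>R (\<Sum>k<N. w (m k) x)) powr p) summable_on A"
    unfolding eq by (rule summable_on_cmult_right[OF m(1)])
  ultimately show ?thesis using N by blast
qed


lemma conv_finite: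
  fixes \<xi> f :: "'g::group_add \<Rightarrow> 'k::real_normed_field"
  assumes "finite {\<gamma>. \<xi> \<gamma> \<noteq> 0}"
  shows "conv \<xi> f \<eta> = (\<Sum>\<gamma>\<in>{\<gamma>. \<xi> \<gamma> \<noteq> 0}. \<xi> \<gamma> * f (- \<gamma> + \<eta>))"
proof -
  have "conv \<xi> f \<eta> = (\<Sum>\<^sub>\<infinity>\<gamma>\<in>{\<gamma>. \<xi> \<gamma> \<noteq> 0}. \<xi> \<gamma> * f (- \<gamma> + \<eta>))"
    unfolding conv_def by (rule infsum_cong_neutral) auto
  thus ?thesis using assms by simp
qed

lemma conv_dirac_diff:
  fixes u :: "'g::group_add \<Rightarrow> 'k::real_normed_field"
  shows "conv (\<lambda>x. dirac s x - dirac 0 x) u \<eta> = u (- s + \<eta>) - u \<eta>"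
proof (cases "s = 0")
  case True
  then show ?thesis unfolding conv_def by simp
next
  case False
  have "conv (\<lambda>x. dirac s x - dirac 0 x) u \<eta> =
     (\<Sum>\<^sub>\<infinity>\<gamma>\<in>{s, 0}. (dirac s \<gamma> - dirac 0 \<gamma>) * u (- \<gamma> + \<eta>))"
    unfolding conv_def by (rule infsum_cong_neutral) (auto simp: dirac_def)
  also have "\<dots> = u (- s + \<eta>) - u \<eta>"
    using False by (simp add: dirac_def)
  finally show ?thesis .
qed

lemma transl_lp:
  fixes f :: "'g::group_add \<Rightarrow> 'k::real_normed_vector"
  assumes p: "0 < p" and D: "in_Dp S p f" and g: "\<gamma> \<in> generated_by S"
  shows "in_lp p (\<lambda>\<eta>. f \<eta> - f (- \<gamma> + \<eta>)) UNIV"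
  using g
proof (induction rule: generated_by.induct)
  case gen_zero
  then show ?case by (simp add: in_lp_zero)
next
  case (gen_step s x)
  have a: "in_lp p (\<lambda>\<eta>. f \<eta> - f (- s + \<eta>)) UNIV"
  proof -
    define \<iota> where "\<iota> \<eta> = (\<eta>, - s + \<eta>)" for \<eta> :: 'g
    have "(\<lambda>e. norm (grad f e) powr p) summable_on cayley_edges S"
      using D unfolding in_Dp_def in_lp_def .
    moreover have "\<iota> ` UNIV \<subseteq> cayley_edges S"
      using gen_step(1) unfolding \<iota>_def cayley_edges_def by auto
    ultimately have "(\<lambda>e. norm (grad f e) powr p) summable_on \<iota> ` UNIV"
      using summable_on_subset by blast
    moreover have "inj \<iota>" unfolding \<iota>_def by (auto intro: injI)
    ultimately have "((\<lambda>e. norm (grad f e) powr p) \<circ> \<iota>) summable_on UNIV"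
      using summable_on_reindex by blast
    thus ?thesis unfolding in_lp_def \<iota>_def grad_def o_def
      by (simp add: norm_minus_commute)
  qed
  have b: "in_lp p (\<lambda>\<eta>. f (- s + \<eta>) - f (- x + (- s + \<eta>))) UNIV"
  proof -
    have bij: "bij_betw (\<lambda>\<eta>::'g. - s + \<eta>) UNIV UNIV"
      by (rule bij_betw_byWitness[of _ "\<lambda>y. s + y"]) (auto simp: add.assoc[symmetric])
    show ?thesis
      using gen_step(3) summable_on_reindex_bij_betw[OF bij, of "\<lambda>y. norm (f y - f (- x + y)) powr p"]
      unfolding in_lp_def by simp
  qed
  have "in_lp p (\<lambda>\<eta>. (f \<eta> - f (- s + \<eta>)) + (f (- s + \<eta>) - f (- x + (- s + \<eta>)))) UNIV"
    by (rule in_lp_add[OF p a b])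
  thus ?case by (simp add: minus_add add.assoc[symmetric])
qed

lemma edge_bij:
  fixes S :: "'g::group_add set"
  shows "bij_betw (\<lambda>z. (snd z, - fst z + snd z)) (S \<times> UNIV) (cayley_edges S)"
  unfolding bij_betw_def
proof
  show "inj_on (\<lambda>z. (snd z, - fst z + snd z)) (S \<times> UNIV)"
    by (auto intro!: inj_onI)
  show "(\<lambda>z. (snd z, - fst z + snd z)) ` (S \<times> UNIV) = cayley_edges S"
    unfolding cayley_edges_def by force
qed


lemma f_minus_conv:
  fixes f :: "'g::group_add \<Rightarrow> 'k::real_normed_field" and \<xi> :: "'g \<Rightarrow> 'k"
  assumes p: "0 < p" and D: "in_Dp S p f" and gen: "generated_by S = UNIV"
    and fin: "finite {\<gamma>. \<xi> \<gamma> \<noteq> 0}" and one: "(\<Sum>\<gamma>\<in>{\<gamma>. \<xi> \<gamma> \<noteq> 0}. \<xi> \<gamma>) = 1"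
  shows "in_lp p (\<lambda>x. f x - conv \<xi> f x) UNIV"
proof -
  have eq: "f x - conv \<xi> f x = (\<Sum>\<gamma>\<in>{\<gamma>. \<xi> \<gamma> \<noteq> 0}. \<xi> \<gamma> * (f x - f (- \<gamma> + x)))" for x
  proof -
    have "f x = (\<Sum>\<gamma>\<in>{\<gamma>. \<xi> \<gamma> \<noteq> 0}. \<xi> \<gamma>) * f x" using one by simp
    thus ?thesis
      by (simp add: conv_finite[OF fin] sum_distrib_right right_diff_distrib sum_subtractf)
  qed
  show ?thesis unfolding eq
    by (intro in_lp_sum[OF p fin] in_lp_scale transl_lp[OF p D]) (use gen in auto)
qed

theorem lemma3p1:
  fixes S :: "'g::group_add set" and p :: real
    and f :: "'g \<Rightarrow> 'k::{real_normed_field, banach}"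
    and \<xi> :: "nat \<Rightarrow> 'g \<Rightarrow> 'k"
  assumes "finite_symmetric_generating S"
    and "1 < p"
    and "in_Dp S p f"
    and "\<And>n. finite {\<gamma>. \<xi> n \<gamma> \<noteq> 0}"
    and "\<And>n. (\<Sum>\<gamma>\<in>{\<gamma>. \<xi> n \<gamma> \<noteq> 0}. \<xi> n \<gamma>) = 1"
    and "\<And>s \<eta>. s \<in> S \<Longrightarrow>
           (\<lambda>n. conv (\<lambda>x. dirac s x - dirac 0 x) (conv (\<xi> n) f) \<eta>) \<longlonglongrightarrow> 0"
    and "\<exists>K>0. \<forall>s\<in>S. \<forall>n.
           in_lp p (conv (\<lambda>x. dirac s x - dirac 0 x) (conv (\<xi> n) f)) UNIV \<and>
           lp_norm p (conv (\<lambda>x. dirac s x - dirac 0 x) (conv (\<xi> n) f)) UNIV < K"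
  shows "reduced_lpH1_class_zero S p f"
proof -
  note fsg = assms(1)[unfolded finite_symmetric_generating_def]
  have finS: "finite S" and gen: "generated_by S = UNIV" using fsg by auto
  have p: "1 < p" and p0: "0 < p" using assms(2) by auto
  obtain K where K: "K > 0" "\<And>s n. s \<in> S \<Longrightarrow>
           in_lp p (conv (\<lambda>x. dirac s x - dirac 0 x) (conv (\<xi> n) f)) UNIV \<and>
           lp_norm p (conv (\<lambda>x. dirac s x - dirac 0 x) (conv (\<xi> n) f)) UNIV < K"
    using assms(7) by blast
  define w where "w n z = conv (\<lambda>x. dirac (fst z) x - dirac 0 x) (conv (\<xi> n) f) (snd z)"
    for n and z :: "'g \<times> 'g"
  define A where "A = S \<times> (UNIV :: 'g set)"
  have sumS: "(\<lambda>y. norm (w n (s, y)) powr p) summable_on UNIV" if "s \<in> S" for n s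
    using K(2)[OF that, of n] unfolding in_lp_def w_def by simp
  have boundS: "(\<Sum>\<^sub>\<infinity>y. norm (w n (s, y)) powr p) \<le> K powr p" if "s \<in> S" for n s
  proof -
    define I where "I = (\<Sum>\<^sub>\<infinity>y. norm (w n (s, y)) powr p)"
    have I0: "0 \<le> I" unfolding I_def by (rule infsum_nonneg) auto
    have "I powr (1 / p) < K" using K(2)[OF that, of n] unfolding lp_norm_def I_def w_def by simp
    hence "(I powr (1 / p)) powr p < K powr p"
      using p0 by (intro powr_less_mono2) auto
    thus ?thesis using I0 p0 unfolding I_def[symmetric] by (simp add: powr_powr)
  qed
  have summ: "(\<lambda>z. norm (w n z) powr p) summable_on A" for n
    unfolding A_def
  proof (rule summable_on_SigmaI[where g = "\<lambda>s. \<Sum>\<^sub>\<infinity>y. norm (w n (s, y)) powr p"])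
    show "((\<lambda>y. norm (w n (s, y)) powr p) has_sum (\<Sum>\<^sub>\<infinity>y. norm (w n (s, y)) powr p)) UNIV"
      if "s \<in> S" for s using sumS[OF that] by (simp add: has_sum_infsum)
  qed (use finS in auto)
  have bound: "(\<Sum>\<^sub>\<infinity>z\<in>A. norm (w n z) powr p) \<le> real (card S) * K powr p" for n
  proof -
    have "(\<Sum>\<^sub>\<infinity>z\<in>A. norm (w n z) powr p) = (\<Sum>\<^sub>\<infinity>s\<in>S. \<Sum>\<^sub>\<infinity>y. norm (w n (s, y)) powr p)"
      using infsum_Sigma_banach[OF summ[of n, unfolded A_def]] unfolding A_def by simp
    also have "\<dots> = (\<Sum>s\<in>S. \<Sum>\<^sub>\<infinity>y. norm (w n (s, y)) powr p)" using finS by simp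
    also have "\<dots> \<le> (\<Sum>s\<in>S. K powr p)" by (rule sum_mono) (rule boundS)
    finally show ?thesis by simp
  qed
  have cv: "(\<lambda>n. w n z) \<longlonglongrightarrow> 0" if "z \<in> A" for z
    using assms(6)[of "fst z" "snd z"] that unfolding A_def w_def by auto
  show ?thesis
    unfolding reduced_lpH1_class_zero_def
  proof (intro allI impI)
    fix \<epsilon> :: real assume e: "\<epsilon> > 0"
    obtain N m where N: "0 < N"
      "(\<lambda>x. norm ((1 / real N) *\<^sub>R (\<Sum>k<N. w (m k) x)) powr p) summable_on A"
      "(\<Sum>\<^sub>\<infinity>x\<in>A. norm ((1 / real N) *\<^sub>R (\<Sum>k<N. w (m k) x)) powr p) < \<epsilon> powr p"
      using core[OF p summ bound cv, of "\<epsilon> powr p"] e by auto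
    define H where "H x = (1 / real N) *\<^sub>R (\<Sum>k<N. conv (\<xi> (m k)) f x)" for x
    have Hw: "H (- s + x) - H x = (1 / real N) *\<^sub>R (\<Sum>k<N. w (m k) (s, x))" for s x
      unfolding H_def w_def by (simp add: conv_dirac_diff scaleR_diff_right sum_subtractf)
    have g_eq: "f x - H x = (1 / real N) *\<^sub>R (\<Sum>k<N. f x - conv (\<xi> (m k)) f x)" for x
    proof -
      have "of_nat N * f x = real N *\<^sub>R f x" by (simp add: scaleR_conv_of_real)
      hence "(1 / real N) *\<^sub>R (\<Sum>k<N. f x) = f x" using N(1) by simp
      thus ?thesis unfolding H_def by (simp add: sum_subtractf scaleR_diff_right)
    qed
    have glp: "in_lp p (\<lambda>x. f x - H x) UNIV"
      unfolding g_eq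
      by (intro in_lp_scaleR in_lp_sum[OF p0] f_minus_conv[OF p0 assms(3) gen assms(4) assms(5)]) auto
    have edges: "(\<Sum>\<^sub>\<infinity>e\<in>cayley_edges S. norm (grad (\<lambda>x. H x - H 0) e) powr p)
        = (\<Sum>\<^sub>\<infinity>z\<in>A. norm ((1 / real N) *\<^sub>R (\<Sum>k<N. w (m k) z)) powr p)"
    proof -
      have "(\<Sum>\<^sub>\<infinity>e\<in>cayley_edges S. norm (grad (\<lambda>x. H x - H 0) e) powr p)
         = (\<Sum>\<^sub>\<infinity>z\<in>A. norm (grad (\<lambda>x. H x - H 0) (snd z, - fst z + snd z)) powr p)"
        unfolding A_def by (rule infsum_reindex_bij_betw[OF edge_bij, symmetric])
      also have "\<dots> = (\<Sum>\<^sub>\<infinity>z\<in>A. norm ((1 / real N) *\<^sub>R (\<Sum>k<N. w (m k) z)) powr p)"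
      proof (rule infsum_cong)
        fix z :: "'g \<times> 'g"
        show "norm (grad (\<lambda>x. H x - H 0) (snd z, - fst z + snd z)) powr p =
          norm ((1 / real N) *\<^sub>R (\<Sum>k<N. w (m k) z)) powr p"
          using Hw[of "fst z" "snd z"] by (simp add: grad_def)
      qed
      finally show ?thesis .
    qed
    have "Dp_norm S p (\<lambda>x. f x - (f x - H x) - H 0) < \<epsilon>"
    proof -
      have "Dp_norm S p (\<lambda>x. f x - (f x - H x) - H 0) =
         (\<Sum>\<^sub>\<infinity>z\<in>A. norm ((1 / real N) *\<^sub>R (\<Sum>k<N. w (m k) z)) powr p) powr (1 / p)"
        unfolding Dp_norm_def using edges p0 by simp
      also have "\<dots> < (\<epsilon> powr p) powr (1 / p)"
        using N(3) p0 by (intro powr_less_mono2) (auto intro: infsum_nonneg)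
      also have "\<dots> = \<epsilon>" using p0 e by (simp add: powr_powr)
      finally show ?thesis .
    qed
    thus "\<exists>g c. in_lp p g UNIV \<and> Dp_norm S p (\<lambda>x. f x - g x - c) < \<epsilon>"
      using glp by blast
  qed
qed

end
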